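(* Let $\mathcal H$ be a Hilbert space, $A$ a bounded, everywhere defined, symmetric operator on $\mathcal H$, and $P$ a self-adjoint operator on $\mathcal H$ such that $PA$ is densely defined. Suppose that the range $R(A)$ is closed, that $N(A)\subset D(P)$, and that $PN(A)\subset N(A)$. Then $AP=(PA)^*$ (and hence $APA$ is self-adjoint).
   Context: $D(X)$, $N(X)$, $R(X)$ denote domain, kernel and range of an operator $X$. $D(PA)=\{x\in\mathcal H: Ax\in D(P)\}$, $D(AP)=D(P)$. *)

theory Defs
  imports "HOL-Analysis.Analysis"
begin

text \<open>The distribution has no complex inner product spaces, so we introduce them:
  a real normed vector space with a compatible complex scalar multiplication and a
  complex inner product (linear in the second, conjugate-linear in the first argument)
  inducing the norm.\<close>

class complex_inner = real_normed_vector +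
  fixes scaleC :: "complex \<Rightarrow> 'a \<Rightarrow> 'a"
    and cinner :: "'a \<Rightarrow> 'a \<Rightarrow> complex"
  assumes scaleC_add_right: "scaleC a (x + y) = scaleC a x + scaleC a y"
    and scaleC_add_left: "scaleC (a + b) x = scaleC a x + scaleC b x"
    and scaleC_scaleC: "scaleC a (scaleC b x) = scaleC (a * b) x"
    and scaleC_one: "scaleC 1 x = x"
    and scaleC_of_real: "scaleC (complex_of_real r) x = scaleR r x"
    and cinner_commute: "cinner x y = cnj (cinner y x)"
    and cinner_add_left: "cinner (x + y) z = cinner x z + cinner y z"
    and cinner_scaleC_left: "cinner (scaleC a x) y = cnj a * cinner x y"
    and cinner_ge_zero: "Im (cinner x x) = 0 \<and> 0 \<le> Re (cinner x x)"
    and cinner_eq_zero: "cinner x x = 0 \<longleftrightarrow> x = 0"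
    and norm_eq_sqrt_cinner: "norm x = sqrt (Re (cinner x x))"

class chilbert_space = complex_inner + complete_space

text \<open>An operator is a pair (domain, map); the map is only meaningful on the domain.\<close>
type_synonym 'a linop = "'a set \<times> ('a \<Rightarrow> 'a)"

definition dom :: "'a linop \<Rightarrow> 'a set" where "dom T = fst T"
definition app :: "'a linop \<Rightarrow> 'a \<Rightarrow> 'a" where "app T = snd T"

definition csubspace :: "'a::complex_inner set \<Rightarrow> bool" where
  "csubspace D \<longleftrightarrow> 0 \<in> D \<and> (\<forall>x\<in>D. \<forall>y\<in>D. x + y \<in> D) \<and> (\<forall>c x. x \<in> D \<longrightarrow> scaleC c x \<in> D)"

definition is_linop :: "'a::complex_inner linop \<Rightarrow> bool" where
  "is_linop T \<longleftrightarrow> csubspace (dom T) \<and>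
     (\<forall>x\<in>dom T. \<forall>y\<in>dom T. app T (x + y) = app T x + app T y) \<and>
     (\<forall>c. \<forall>x\<in>dom T. app T (scaleC c x) = scaleC c (app T x))"

definition densely_defined :: "'a::complex_inner linop \<Rightarrow> bool" where
  "densely_defined T \<longleftrightarrow> closure (dom T) = UNIV"

definition op_eq :: "'a linop \<Rightarrow> 'a linop \<Rightarrow> bool" where
  "op_eq S T \<longleftrightarrow> dom S = dom T \<and> (\<forall>x\<in>dom S. app S x = app T x)"

definition adjoint :: "'a::complex_inner linop \<Rightarrow> 'a linop" where
  "adjoint T = ({y. \<exists>z. \<forall>x\<in>dom T. cinner (app T x) y = cinner x z},
                (\<lambda>y. THE z. \<forall>x\<in>dom T. cinner (app T x) y = cinner x z))"

definition self_adjoint :: "'a::complex_inner linop \<Rightarrow> bool" where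
  "self_adjoint T \<longleftrightarrow> is_linop T \<and> densely_defined T \<and> op_eq T (adjoint T)"

definition op_comp :: "'a linop \<Rightarrow> 'a linop \<Rightarrow> 'a linop" where
  "op_comp S T = ({x \<in> dom T. app T x \<in> dom S}, (\<lambda>x. app S (app T x)))"

definition full_op :: "('a \<Rightarrow> 'a) \<Rightarrow> 'a linop" where
  "full_op f = (UNIV, f)"

definition bounded_clinear :: "('a::complex_inner \<Rightarrow> 'a) \<Rightarrow> bool" where
  "bounded_clinear f \<longleftrightarrow> (\<forall>x y. f (x + y) = f x + f y) \<and> (\<forall>c x. f (scaleC c x) = scaleC c (f x))
     \<and> (\<exists>K. \<forall>x. norm (f x) \<le> norm x * K)"

definition symmetric_op :: "('a::complex_inner \<Rightarrow> 'a) \<Rightarrow> bool" where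
  "symmetric_op f \<longleftrightarrow> (\<forall>x y. cinner (f x) y = cinner x (f y))"

definition kernel :: "('a::zero \<Rightarrow> 'a) \<Rightarrow> 'a set" where
  "kernel f = {x. f x = 0}"

end

theory Submission
  imports Defs
begin




lemma cinner_add_right: "cinner x (y + z) = cinner x y + cinner x (z::'a::complex_inner)"
  using cinner_commute[of x "y+z"] cinner_commute[of y x] cinner_commute[of z x]
  by (simp add: cinner_add_left)

lemma cinner_scaleC_right: "cinner x (scaleC a y) = a * cinner x (y::'a::complex_inner)"
  using cinner_commute[of x "scaleC a y"] cinner_commute[of y x]
  by (simp add: cinner_scaleC_left)

lemma cinner_zero_left[simp]: "cinner 0 (y::'a::complex_inner) = 0"
  using cinner_add_left[of 0 0 y] by simp

lemma cinner_zero_right[simp]: "cinner y (0::'a::complex_inner) = 0"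
  using cinner_add_right[of y 0 0] by simp

lemma scaleC_m1: "scaleC (-1) (x::'a::complex_inner) = - x"
  using scaleC_of_real[of "-1" x] by simp

lemma cinner_minus_left: "cinner (- x) (y::'a::complex_inner) = - cinner x y"
  using cinner_add_left[of x "-x" y] by (simp add: eq_neg_iff_add_eq_0 add.commute)

lemma cinner_minus_right: "cinner y (- x::'a::complex_inner) = - cinner y x"
  using cinner_add_right[of y x "-x"] by (simp add: eq_neg_iff_add_eq_0 add.commute)

lemma cinner_diff_left: "cinner (x - z) (y::'a::complex_inner) = cinner x y - cinner z y"
  using cinner_add_left[of x "-z" y] by (simp add: cinner_minus_left)

lemma cinner_diff_right: "cinner y (x - z::'a::complex_inner) = cinner y x - cinner y z"
  using cinner_add_right[of y x "-z"] by (simp add: cinner_minus_right)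

lemma norm_sq: "(norm (x::'a::complex_inner))^2 = Re (cinner x x)"
  using norm_eq_sqrt_cinner[of x] cinner_ge_zero[of x] by simp

lemma Re_commute: "Re (cinner x (y::'a::complex_inner)) = Re (cinner y x)"
  using cinner_commute[of x y] by simp

lemma norm_add_sq: "(norm (x + y::'a::complex_inner))^2 = (norm x)^2 + 2 * Re (cinner x y) + (norm y)^2"
  unfolding norm_sq using Re_commute[of y x] by (simp add: cinner_add_left cinner_add_right)

lemma norm_diff_sq: "(norm (x - y::'a::complex_inner))^2 = (norm x)^2 - 2 * Re (cinner x y) + (norm y)^2"
  unfolding norm_sq using Re_commute[of y x] by (simp add: cinner_diff_left cinner_diff_right)

lemma cinner_scaleR_left: "cinner (scaleR r x) (y::'a::complex_inner) = complex_of_real r * cinner x y"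
  using cinner_scaleC_left[of "complex_of_real r" x y] scaleC_of_real[of r x] by simp

lemma cinner_scaleR_right: "cinner y (scaleR r x::'a::complex_inner) = complex_of_real r * cinner y x"
  using cinner_scaleC_right[of y "complex_of_real r" x] scaleC_of_real[of r x] by simp

lemma cinner_self_zero: "cinner x x = 0 \<Longrightarrow> (x::'a::complex_inner) = 0"
  using cinner_eq_zero by blast

lemma Re_polar: "Re (cinner x (w::'a::complex_inner)) = ((norm (x + w))^2 - (norm (x - w))^2) / 4"
  by (simp add: norm_add_sq norm_diff_sq)

lemma dense_unique:
  fixes w :: "'a::complex_inner"
  assumes "closure D = UNIV" "\<forall>x\<in>D. cinner x w = 0"
  shows "w = 0"
proof -
  let ?S = "{x::'a. ((norm (x + w))^2 - (norm (x - w))^2) / 4 = 0}"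
  have "closed ?S"
    by (intro closed_Collect_eq continuous_intros) auto
  moreover have "D \<subseteq> ?S" using assms(2) Re_polar by (metis (mono_tags, lifting) mem_Collect_eq subsetI zero_complex.simps(1))
  ultimately have "closure D \<subseteq> ?S" by (simp add: closure_minimal)
  hence "w \<in> ?S" using assms(1) by blast
  hence "Re (cinner w w) = 0" using Re_polar[of w w] by simp
  moreover have "Im (cinner w w) = 0" using cinner_ge_zero by blast
  ultimately have "cinner w w = 0" by (simp add: complex_eq_iff)
  thus ?thesis by (rule cinner_self_zero)
qed



lemma min_orth:
  fixes M :: "'a::complex_inner set"
  assumes mM: "m \<in> M" and mn: "\<forall>m'\<in>M. (norm (v - m))^2 \<le> (norm (v - m'))^2"
    and add: "\<forall>a\<in>M. \<forall>b\<in>M. a + b \<in> M" and sc: "\<forall>a\<in>M. \<forall>r. scaleR r a \<in> M" and wM: "w \<in> M"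
  shows "Re (cinner w (v - m)) = 0"
proof (rule ccontr)
  define a where "a = Re (cinner w (v - m))"
  define b where "b = (norm w)^2"
  define t where "t = a / (b + 1)"
  assume "Re (cinner w (v - m)) \<noteq> 0"
  hence a0: "a \<noteq> 0" by (simp add: a_def)
  have b0: "b \<ge> 0" by (simp add: b_def)
  have "m + scaleR t w \<in> M" using add sc mM wM by blast
  hence le: "(norm (v - m))^2 \<le> (norm (v - (m + scaleR t w)))^2" using mn by blast
  have "v - (m + scaleR t w) = (v - m) - scaleR t w" by (simp add: algebra_simps)
  hence "(norm (v - (m + scaleR t w)))^2 = (norm (v - m))^2 - 2 * Re (cinner (v - m) (scaleR t w)) + (norm (scaleR t w))^2"
    using norm_diff_sq by metis
  also have "Re (cinner (v - m) (scaleR t w)) = t * a"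
    unfolding a_def using Re_commute[of "v - m" w] by (simp add: cinner_scaleR_right)
  also have "(norm (scaleR t w))^2 = t^2 * b" by (simp add: b_def power_mult_distrib)
  finally have "0 \<le> - 2 * (t * a) + t^2 * b" using le by simp
  moreover have "- 2 * (t * a) + t^2 * b < 0"
  proof -
    have bp: "b + 1 > 0" using b0 by simp
    have ts: "t * (b + 1) = a" unfolding t_def using bp by simp
    have "(- 2 * (t * a) + t^2 * b) * (b + 1)^2 = - 2 * a * (t * (b + 1)) * (b + 1) + (t * (b + 1))^2 * b"
      by (simp add: algebra_simps power2_eq_square)
    also have "\<dots> = - (a^2 * (b + 2))" unfolding ts by (simp add: algebra_simps power2_eq_square)
    finally have eq: "(- 2 * (t * a) + t^2 * b) * (b + 1)^2 = - (a^2 * (b + 2))" .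
    have "- (a^2 * (b + 2)) < 0" using a0 b0 by (simp add: add_nonneg_pos)
    hence "(- 2 * (t * a) + t^2 * b) * (b + 1)^2 < 0" using eq by simp
    thus ?thesis using bp by (simp add: mult_less_0_iff)
  qed
  ultimately show False by simp
qed

lemma parallelogram: "(norm (a + b::'a::complex_inner))^2 + (norm (a - b))^2 = 2 * (norm a)^2 + 2 * (norm b)^2"
  by (simp add: norm_add_sq norm_diff_sq)

lemma proj_exists:
  fixes M :: "'a::chilbert_space set"
  assumes cl: "closed M" and z: "0 \<in> M" and add: "\<forall>a\<in>M. \<forall>b\<in>M. a + b \<in> M"
    and sc: "\<forall>a\<in>M. \<forall>r. scaleR r a \<in> M"
  shows "\<exists>m\<in>M. \<forall>m'\<in>M. (norm (v - m))^2 \<le> (norm (v - m'))^2"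
proof -
  define S where "S = (\<lambda>m. (norm (v - m))^2) ` M"
  define d where "d = Inf S"
  have ne: "S \<noteq> {}" using z S_def by auto
  have bdd: "bdd_below S" unfolding S_def bdd_below_def by (intro exI[of _ 0]) auto
  have low: "\<forall>m\<in>M. d \<le> (norm (v - m))^2" unfolding d_def S_def
    using bdd S_def by (auto intro: cInf_lower)
  have "\<forall>n::nat. \<exists>m\<in>M. (norm (v - m))^2 < d + inverse (real (Suc n))"
  proof
    fix n :: nat
    have "Inf S < d + inverse (real (Suc n))" unfolding d_def by simp
    then obtain x where "x \<in> S" "x < d + inverse (real (Suc n))" using cInf_lessD[OF ne] by blast
    thus "\<exists>m\<in>M. (norm (v - m))^2 < d + inverse (real (Suc n))" unfolding S_def by auto
  qed
  then obtain f where fM: "\<And>n. f n \<in> M" and fb: "\<And>n. (norm (v - f n))^2 < d + inverse (real (Suc n))"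
    by metis
  have key: "(norm (f n - f k))^2 \<le> 2 * inverse (real (Suc n)) + 2 * inverse (real (Suc k))" for n k
  proof -
    define mid where "mid = scaleR (1/2) (f n + f k)"
    have "mid \<in> M" unfolding mid_def using add sc fM by blast
    hence "d \<le> (norm (v - mid))^2" using low by blast
    have e1: "(v - f n) + (v - f k) = scaleR 2 (v - mid)" unfolding mid_def
      by (simp add: algebra_simps scaleR_2)
    have "(norm ((v - f n) + (v - f k)))^2 = 4 * (norm (v - mid))^2"
      unfolding e1 by (simp add: power_mult_distrib)
    moreover have "(v - f n) - (v - f k) = f k - f n" by simp
    moreover have "norm (f k - f n) = norm (f n - f k)" by (rule norm_minus_commute)
    ultimately have "4 * (norm (v - mid))^2 + (norm (f n - f k))^2 = 2 * (norm (v - f n))^2 + 2 * (norm (v - f k))^2"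
      using parallelogram[of "v - f n" "v - f k"] by simp
    thus ?thesis using fb[of n] fb[of k] \<open>d \<le> (norm (v - mid))^2\<close> by linarith
  qed
  have "Cauchy f"
  proof (rule metric_CauchyI)
    fix e :: real assume e: "0 < e"
    obtain N :: nat where N: "4 / e^2 < real N" using reals_Archimedean2 by blast
    have "4 / e^2 < real (Suc N)" using N by simp
    hence N': "4 * inverse (real (Suc N)) < e^2" using e by (simp add: field_simps)
    show "\<exists>M. \<forall>m\<ge>M. \<forall>n\<ge>M. dist (f m) (f n) < e"
    proof (intro exI allI impI)
      fix m n assume mn: "N \<le> m" "N \<le> n"
      have "inverse (real (Suc m)) \<le> inverse (real (Suc N))" using mn by (simp add: le_imp_inverse_le)
      moreover have "inverse (real (Suc n)) \<le> inverse (real (Suc N))" using mn by (simp add: le_imp_inverse_le)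
      ultimately have "(norm (f m - f n))^2 < e^2" using key[of m n] N' by linarith
      hence "norm (f m - f n) < e" using e by (simp add: power2_less_imp_less less_imp_le)
      thus "dist (f m) (f n) < e" by (simp add: dist_norm)
    qed
  qed
  then obtain m where fm: "f \<longlonglongrightarrow> m" using Cauchy_convergent convergent_def by blast
  have mM: "m \<in> M" using closed_sequentially[OF cl] fM fm by blast
  have l1: "(\<lambda>n. (norm (v - f n))^2) \<longlonglongrightarrow> (norm (v - m))^2"
    by (intro tendsto_intros fm)
  have l2: "(\<lambda>n. d + inverse (real (Suc n))) \<longlonglongrightarrow> d + 0"
    by (intro tendsto_intros LIMSEQ_inverse_real_of_nat)
  have "(norm (v - m))^2 \<le> d + 0"
    by (rule LIMSEQ_le[OF l1 l2]) (use fb less_imp_le in blast)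
  hence "\<forall>m'\<in>M. (norm (v - m))^2 \<le> (norm (v - m'))^2"
  proof (intro ballI)
    fix m' assume "m' \<in> M"
    hence "d \<le> (norm (v - m'))^2" using low by blast
    thus "(norm (v - m))^2 \<le> (norm (v - m'))^2" using \<open>(norm (v - m))^2 \<le> d + 0\<close> by linarith
  qed
  thus ?thesis using mM by blast
qed




lemma dom_op_comp[simp]: "dom (op_comp S T) = {x \<in> dom T. app T x \<in> dom S}"
  by (simp add: op_comp_def dom_def)
lemma app_op_comp[simp]: "app (op_comp S T) x = app S (app T x)"
  by (simp add: op_comp_def app_def)
lemma dom_full_op[simp]: "dom (full_op f) = UNIV"
  by (simp add: full_op_def dom_def)
lemma app_full_op[simp]: "app (full_op f) = f"
  by (simp add: full_op_def app_def)
lemma dom_adjoint: "dom (adjoint T) = {y. \<exists>z. \<forall>x\<in>dom T. cinner (app T x) y = cinner x z}"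
  by (simp add: adjoint_def dom_def)

lemma adjoint_app:
  fixes T :: "'a::complex_inner linop"
  assumes d: "densely_defined T" and h: "\<forall>x\<in>dom T. cinner (app T x) y = cinner x z"
  shows "y \<in> dom (adjoint T) \<and> app (adjoint T) y = z"
proof
  show "y \<in> dom (adjoint T)" using h by (auto simp: dom_adjoint)
  have "(THE z. \<forall>x\<in>dom T. cinner (app T x) y = cinner x z) = z"
  proof (rule the_equality)
    show "\<forall>x\<in>dom T. cinner (app T x) y = cinner x z" by fact
    fix z' assume h': "\<forall>x\<in>dom T. cinner (app T x) y = cinner x z'"
    have "\<forall>x\<in>dom T. cinner x (z' - z) = 0" using h h' by (simp add: cinner_diff_right)
    hence "z' - z = 0" using d dense_unique unfolding densely_defined_def by blast
    thus "z' = z" by simp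
  qed
  thus "app (adjoint T) y = z" by (simp add: adjoint_def app_def)
qed

lemma decomp:
  fixes A :: "'a::chilbert_space \<Rightarrow> 'a"
  assumes Ab: "bounded_clinear A" and As: "symmetric_op A" and cl: "closed (range A)"
  shows "\<exists>x. A (v - A x) = 0"
proof -
  have Aadd: "\<And>x y. A (x + y) = A x + A y" and AC: "\<And>c x. A (scaleC c x) = scaleC c (A x)"
    using Ab unfolding bounded_clinear_def by auto
  have A0: "A 0 = 0" using Aadd[of 0 0] by simp
  have AR: "scaleR r (A x) = A (scaleR r x)" for r x
    using AC[of "complex_of_real r" x] scaleC_of_real by metis
  have sym: "\<And>x y. cinner (A x) y = cinner x (A y)" using As unfolding symmetric_op_def by blast
  have z: "0 \<in> range A" using A0 rangeI by metis
  have ad: "\<forall>a\<in>range A. \<forall>b\<in>range A. a + b \<in> range A"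
  proof (intro ballI)
    fix a b assume "a \<in> range A" "b \<in> range A"
    then obtain x y where "a = A x" "b = A y" by blast
    thus "a + b \<in> range A" using Aadd[of x y] rangeI by metis
  qed
  have sc: "\<forall>a\<in>range A. \<forall>r. scaleR r a \<in> range A"
  proof (intro ballI allI)
    fix a r assume "a \<in> range A"
    then obtain x where "a = A x" by blast
    thus "scaleR r a \<in> range A" using AR[of r x] rangeI by metis
  qed
  obtain m where mM: "m \<in> range A" and mn: "\<forall>m'\<in>range A. (norm (v - m))^2 \<le> (norm (v - m'))^2"
    using proj_exists[OF cl z ad sc, of v] by blast
  obtain x where mx: "m = A x" using mM by blast
  have re: "Re (cinner (A y) (v - A x)) = 0" for y
    using min_orth[OF mM mn ad sc, of "A y"] mx by simp
  have full: "cinner (A y) (v - A x) = 0" for y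
  proof -
    have "Re (cinner (A (scaleC \<i> y)) (v - A x)) = 0" by (rule re)
    hence "Im (cinner (A y) (v - A x)) = 0" by (simp add: AC cinner_scaleC_left)
    thus ?thesis using re[of y] by (simp add: complex_eq_iff)
  qed
  have "cinner (A (v - A x)) (A (v - A x)) = 0" using full[of "A (v - A x)"] sym by metis
  thus ?thesis using cinner_self_zero by blast
qed


theorem theorem7:
  fixes A :: "'a::chilbert_space \<Rightarrow> 'a" and P :: "'a linop"
  assumes A_bounded: "bounded_clinear A"
    and A_sym: "symmetric_op A"
    and P_sa: "self_adjoint P"
    and PA_dense: "densely_defined (op_comp P (full_op A))"
    and R_closed: "closed (range A)"
    and N_sub: "kernel A \<subseteq> dom P"
    and N_inv: "app P ` kernel A \<subseteq> kernel A"
  shows "op_eq (op_comp (full_op A) P) (adjoint (op_comp P (full_op A)))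
         \<and> self_adjoint (op_comp (full_op A) (op_comp P (full_op A)))"
proof -
  have Aadd: "\<And>x y. A (x + y) = A x + A y" and AC: "\<And>c x. A (scaleC c x) = scaleC c (A x)"
    using A_bounded unfolding bounded_clinear_def by auto
  have A0: "A 0 = 0" using Aadd[of 0 0] by simp
  have sym: "\<And>x y. cinner (A x) y = cinner x (A y)" using A_sym unfolding symmetric_op_def by blast
  have dec: "\<And>v. \<exists>x. A (v - A x) = 0" using decomp[OF A_bounded A_sym R_closed] by blast
  have ker1: "\<And>n w. A n = 0 \<Longrightarrow> cinner n (A w) = 0"
  proof -
    fix n w assume "A n = 0" thus "cinner n (A w) = 0" using sym[of n w] by simp
  qed
  have ker2: "\<And>n w. A n = 0 \<Longrightarrow> cinner (A w) n = 0"
  proof -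
    fix n w assume "A n = 0" thus "cinner (A w) n = 0" using sym[of w n] by simp
  qed
  have linP: "is_linop P" and dP: "densely_defined P" and eqP: "op_eq P (adjoint P)"
    using P_sa unfolding self_adjoint_def by auto
  have csP: "csubspace (dom P)" using linP unfolding is_linop_def by blast
  have dP0: "0 \<in> dom P" and dPadd: "\<And>x y. x \<in> dom P \<Longrightarrow> y \<in> dom P \<Longrightarrow> x + y \<in> dom P"
    and dPC: "\<And>c x. x \<in> dom P \<Longrightarrow> scaleC c x \<in> dom P"
    using csP unfolding csubspace_def by auto
  have dPdiff: "\<And>x y. x \<in> dom P \<Longrightarrow> y \<in> dom P \<Longrightarrow> x - y \<in> dom P"
  proof -
    fix x y assume "x \<in> dom P" "y \<in> dom P"
    thus "x - y \<in> dom P" using dPadd[of x "scaleC (-1) y"] dPC[of y "-1"] by (simp add: scaleC_m1)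
  qed
  have Padd: "\<And>x y. x \<in> dom P \<Longrightarrow> y \<in> dom P \<Longrightarrow> app P (x + y) = app P x + app P y"
    and PC: "\<And>c x. x \<in> dom P \<Longrightarrow> app P (scaleC c x) = scaleC c (app P x)"
    using linP unfolding is_linop_def by auto
  have P0: "app P 0 = 0" using Padd[OF dP0 dP0] by simp
  have domPadj: "dom P = dom (adjoint P)" and appPadj: "\<And>x. x \<in> dom P \<Longrightarrow> app P x = app (adjoint P) x"
    using eqP unfolding op_eq_def by auto
  have Psym: "\<And>x y. x \<in> dom P \<Longrightarrow> y \<in> dom P \<Longrightarrow> cinner (app P x) y = cinner x (app P y)"
  proof -
    fix x y assume x: "x \<in> dom P" and y: "y \<in> dom P"
    have "y \<in> dom (adjoint P)" using y domPadj by blast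
    then obtain z where hz: "\<forall>x\<in>dom P. cinner (app P x) y = cinner x z"
      unfolding dom_adjoint by blast
    have "app (adjoint P) y = z" using adjoint_app[OF dP hz] by blast
    hence "app P y = z" using appPadj[OF y] by simp
    thus "cinner (app P x) y = cinner x (app P y)" using hz x by simp
  qed
  define T where "T = op_comp P (full_op A)"
  have domT: "dom T = {x. A x \<in> dom P}" and appT: "\<And>x. app T x = app P (A x)"
    unfolding T_def by auto
  have dT: "densely_defined T" using PA_dense T_def by simp
  have incl1: "\<And>y. y \<in> dom P \<Longrightarrow> y \<in> dom (adjoint T) \<and> app (adjoint T) y = A (app P y)"
  proof -
    fix y assume y: "y \<in> dom P"
    have "\<forall>x\<in>dom T. cinner (app T x) y = cinner x (A (app P y))"
      using Psym[OF _ y] sym by (simp add: domT appT)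
    thus "y \<in> dom (adjoint T) \<and> app (adjoint T) y = A (app P y)" by (rule adjoint_app[OF dT])
  qed
  have incl2: "\<And>y. y \<in> dom (adjoint T) \<Longrightarrow> y \<in> dom P"
  proof -
    fix y assume "y \<in> dom (adjoint T)"
    then obtain z where hz: "\<And>x. A x \<in> dom P \<Longrightarrow> cinner (app P (A x)) y = cinner x z"
      by (auto simp: dom_adjoint domT appT)
    obtain a where ya: "A (y - A a) = 0" using dec by blast
    define y0 where "y0 = y - A a"
    have y0k: "A y0 = 0" using ya y0_def by simp
    have y0d: "y0 \<in> dom P" using N_sub y0k unfolding kernel_def by blast
    have yy: "y = A a + y0" using y0_def by simp
    obtain b where zb: "A (z - A b) = 0" using dec by blast
    define z0 where "z0 = z - A b"
    have z0k: "A z0 = 0" using zb z0_def by simp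
    have "cinner z0 z = 0" using hz[of z0] z0k dP0 P0 by simp
    moreover have "cinner z0 z = cinner z0 (A b) + cinner z0 z0"
      using z0_def cinner_add_right[of z0 "A b" z0] by simp
    ultimately have "cinner z0 z0 = 0" using ker1[OF z0k] by simp
    hence "z0 = 0" by (rule cinner_self_zero)
    hence zAb: "z = A b" using z0_def by simp
    obtain c where bc: "A (b - A c) = 0" using dec by blast
    define b0 where "b0 = b - A c"
    have b0k: "A b0 = 0" using bc b0_def by simp
    have "\<forall>u\<in>dom P. cinner (app P u) (A a) = cinner u (A c)"
    proof
      fix u assume u: "u \<in> dom P"
      obtain x where ux: "A (u - A x) = 0" using dec by blast
      define u0 where "u0 = u - A x"
      have u0k: "A u0 = 0" using ux u0_def by simp
      have u0d: "u0 \<in> dom P" using N_sub u0k unfolding kernel_def by blast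
      have Pu0k: "A (app P u0) = 0" using N_inv u0k unfolding kernel_def by blast
      have Axd: "A x \<in> dom P" using dPdiff[OF u u0d] u0_def by simp
      have uu: "u = A x + u0" using u0_def by simp
      have e1: "app P u = app P (A x) + app P u0" using uu Padd[OF Axd u0d] by simp
      have e2: "cinner (app P u0) (A a) = 0" using ker1[OF Pu0k] sym[of "app P u0" a] by simp
      have e3: "cinner (app P (A x)) y0 = 0"
      proof -
        have "A (app P y0) = 0" using N_inv y0k unfolding kernel_def by blast
        thus ?thesis using Psym[OF Axd y0d] sym[of x "app P y0"] by simp
      qed
      have e4: "cinner (app P (A x)) y = cinner (A x) (A c)"
      proof -
        have "cinner (app P (A x)) y = cinner x (A b)" using hz[OF Axd] zAb by simp
        also have "\<dots> = cinner (A x) b" using sym by simp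
        also have "b = A c + b0" using b0_def by simp
        also have "cinner (A x) (A c + b0) = cinner (A x) (A c)"
          using ker2[OF b0k] by (simp add: cinner_add_right)
        finally show ?thesis .
      qed
      have "cinner (app P u) (A a) = cinner (app P (A x)) (A a)"
        using e1 e2 by (simp add: cinner_add_left)
      also have "\<dots> = cinner (app P (A x)) y"
        using yy e3 by (simp add: cinner_add_right)
      also have "\<dots> = cinner (A x) (A c)" by (rule e4)
      also have "\<dots> = cinner u (A c)"
        using uu ker1[OF u0k] by (simp add: cinner_add_left)
      finally show "cinner (app P u) (A a) = cinner u (A c)" .
    qed
    hence "A a \<in> dom (adjoint P)" by (auto simp: dom_adjoint)
    hence "A a \<in> dom P" using domPadj by blast
    thus "y \<in> dom P" using yy dPadd y0d by simp
  qed
  have part1: "op_eq (op_comp (full_op A) P) (adjoint T)"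
    unfolding op_eq_def using incl1 incl2 by auto
  define S where "S = op_comp (full_op A) T"
  have domS: "dom S = {x. A x \<in> dom P}" and appS: "\<And>x. app S x = A (app P (A x))"
    unfolding S_def by (auto simp: domT appT)
  have linS: "is_linop S"
    unfolding is_linop_def csubspace_def domS appS
    using A0 dP0 Aadd AC dPadd dPC Padd PC by simp
  have dS: "densely_defined S" using dT domS domT unfolding densely_defined_def by simp
  have S1: "\<And>y. y \<in> dom S \<Longrightarrow> y \<in> dom (adjoint S) \<and> app (adjoint S) y = A (app P (A y))"
  proof -
    fix y assume y: "y \<in> dom S"
    hence Ay: "A y \<in> dom P" using domS by simp
    have "\<forall>x\<in>dom S. cinner (app S x) y = cinner x (A (app P (A y)))"
    proof
      fix x assume "x \<in> dom S"
      hence Ax: "A x \<in> dom P" using domS by simp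
      have "cinner (app S x) y = cinner (app P (A x)) (A y)" using appS sym by simp
      also have "\<dots> = cinner (A x) (app P (A y))" using Psym[OF Ax Ay] .
      also have "\<dots> = cinner x (A (app P (A y)))" using sym by simp
      finally show "cinner (app S x) y = cinner x (A (app P (A y)))" .
    qed
    thus "y \<in> dom (adjoint S) \<and> app (adjoint S) y = A (app P (A y))" by (rule adjoint_app[OF dS])
  qed
  have S2: "\<And>y. y \<in> dom (adjoint S) \<Longrightarrow> y \<in> dom S"
  proof -
    fix y assume "y \<in> dom (adjoint S)"
    then obtain z where hz: "\<forall>x\<in>dom S. cinner (app S x) y = cinner x z"
      by (auto simp: dom_adjoint)
    have "\<forall>x\<in>dom T. cinner (app T x) (A y) = cinner x z"
      using hz domS domT appS appT sym by simp
    hence "A y \<in> dom (adjoint T)" by (auto simp: dom_adjoint)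
    hence "A y \<in> dom P" using incl2 by blast
    thus "y \<in> dom S" using domS by simp
  qed
  have "op_eq S (adjoint S)" unfolding op_eq_def using S1 S2 appS by auto
  hence "self_adjoint S" unfolding self_adjoint_def using linS dS by blast
  thus ?thesis using part1 S_def T_def by simp
qed

end
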